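(* Assume that a collection of nonnegative real numbers $\{\mu_n(a,k) : n\ge 0,\ a\in\{0,1\},\ k\in\mathbb{Z}\}$ satisfies, for all $n\ge 0$: (P1) for $a\in\{0,1\}$, $k\mapsto\mu_n(a,k)$ is $2^n$-periodic, i.e. $\mu_n(a,k)=\mu_n(a,k')$ whenever $k\equiv k'\pmod{2^n}$; (P2) letting $q_n$ denote an integer inverse of $3$ modulo $2^{n+1}$, for all $k\in\mathbb{Z}$ and $a\in\{0,1\}$, \[ \tfrac32\,\mu_n(a,k)=\mu_{n+1}(a,2q_nk)+\mu_{n+1}(\bar a,2q_nk-q_n)+\mu_{n+1}(a,2q_nk-2q_n), \] where $\bar a=1-a$; (P3) for all $k\in\mathbb{Z}$, $\mu_n(0,k)+\mu_n(1,k)=2^{-n}$. Then $\mu_n(a,k)=2^{-n-1}$ for all $n\ge 0$, $a\in\{0,1\}$ and $k\in\mathbb{Z}$. *)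

theory Defs
  imports "HOL-Number_Theory.Number_Theory"
begin

end

theory Submission imports Defs begin

definition Phi :: "real \<Rightarrow> real \<Rightarrow> real \<Rightarrow> real \<Rightarrow> real \<Rightarrow> real" where
 "Phi a b c d e = 7*a*a - 10*a*b + 5*a*c - 3*a*d + 9*b*b - 4*b*c + b*d - b*e - 4*c*c + 2*c*e - d*d - e*e"

lemma key_ineq:
  fixes x0 x1 x2 x3 x4 x5 x6 :: real
  shows "5*(x0-x1+x2)^2 - (x0-x1+x2)*(x2-x3+x4) + (Phi x2 x3 x4 x5 x6 - Phi x0 x1 x2 x3 x4)
     \<le> 4*(5*x2^2 + 5*x3^2 - x2*x5 - x3*x6)"
proof -
  have "4*(5*x2^2 + 5*x3^2 - x2*x5 - x3*x6) - (5*(x0-x1+x2)^2 - (x0-x1+x2)*(x2-x3+x4) + (Phi x2 x3 x4 x5 x6 - Phi x0 x1 x2 x3 x4))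
   = 2*(x0 - x2 - x3 + (1/4)*x4)^2 + 4*(x1 + (5/8)*x2 + (1/4)*x3 - (1/4)*x4)^2
     + (23/16)*(x2 + (30/23)*x3 + (2/23)*x4 - (8/23)*x5)^2
     + (122/23)*(x3 + (119/244)*x4 + (7/244)*x5 - (69/244)*x6)^2
     + (165/122)*(x4 - (1/44)*x5 - (131/660)*x6)^2 + (289/352)*(x5 + (13/289)*x6)^2 + (2258/4335)*x6^2"
    unfolding Phi_def by (simp add: power2_eq_square algebra_simps)
  moreover have "0 \<le> 2*(x0 - x2 - x3 + (1/4)*x4)^2 + 4*(x1 + (5/8)*x2 + (1/4)*x3 - (1/4)*x4)^2
     + (23/16)*(x2 + (30/23)*x3 + (2/23)*x4 - (8/23)*x5)^2
     + (122/23)*(x3 + (119/244)*x4 + (7/244)*x5 - (69/244)*x6)^2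
     + (165/122)*(x4 - (1/44)*x5 - (131/660)*x6)^2 + (289/352)*(x5 + (13/289)*x6)^2 + (2258/4335)*x6^2"
    by simp
  ultimately show ?thesis by linarith
qed
lemma aux1:
  fixes a b :: real
  shows "4*a^2 - (b^2 - a^2)/2 \<le> 5*a^2 - a*b"
proof -
  have "5*a^2 - a*b - (4*a^2 - (b^2 - a^2)/2) = (a-b)^2/2"
    by (simp add: power2_eq_square field_simps)
  moreover have "0 \<le> (a-b)^2/2" by simp
  ultimately show ?thesis by linarith
qed
lemma aux2: fixes x :: real assumes "\<bar>x\<bar> \<le> 1" shows "x^2 \<le> 1"
proof -
  have "\<bar>x\<bar> * \<bar>x\<bar> \<le> 1" using assms by (intro mult_le_one) auto
  then show ?thesis by (simp add: power2_eq_square)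
qed

lemma tele_int:
  fixes f :: "int \<Rightarrow> real"
  assumes "f (int M) = f 0"
  shows "(\<Sum>k<M. f (int k + 1) - f (int k)) = 0"
  using sum_lessThan_telescope[of "\<lambda>k. f (int k)" M] assms by (simp add: add.commute)

lemma split2:
  fixes h :: "int \<Rightarrow> real"
  shows "(\<Sum>j<2*N. h (int j)) = (\<Sum>k<N. h (2*int k) + h (2*int k + 1))"
proof (induction N)
  case 0 then show ?case by simp
next
  case (Suc N)
  have "(\<Sum>j<2*Suc N. h (int j)) = (\<Sum>j<2*N. h (int j)) + h (2*int N) + h (2*int N + 1)"
    by (simp add: algebra_simps)
  then show ?case using Suc by simp
qed

lemma reindex_mult:
  fixes f :: "int \<Rightarrow> real" and M :: nat and q :: int
  assumes M: "M > 0" and cop: "coprime q (int M)" and per: "\<And>x. f x = f (x mod int M)"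
  shows "(\<Sum>j<M. f (int j * q)) = (\<Sum>j<M. f (int j))"
proof -
  define g where "g j = nat ((int j * q) mod int M)" for j
  have gi: "int (g j) = (int j * q) mod int M" for j
    unfolding g_def using M by simp
  have inj: "inj_on g {..<M}"
  proof (rule inj_onI)
    fix a b assume a: "a \<in> {..<M}" and b: "b \<in> {..<M}" and e: "g a = g b"
    have "[int a * q = int b * q] (mod int M)"
      using gi[of a] gi[of b] e unfolding cong_def by simp
    then have "[int a = int b] (mod int M)" using cong_mult_rcancel[OF cop] by simp
    then have "int a mod int M = int b mod int M" unfolding cong_def .
    then show "a = b" using a b by simp
  qed
  have sub: "g ` {..<M} \<subseteq> {..<M}"
  proof
    fix x assume "x \<in> g ` {..<M}"
    then obtain j where x: "x = g j" by auto
    have "int (g j) < int M" using gi[of j] M by simp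
    then show "x \<in> {..<M}" using x by simp
  qed
  have bij: "bij_betw g {..<M} {..<M}"
    using endo_inj_surj[OF _ sub inj] inj unfolding bij_betw_def by simp
  have "(\<Sum>j<M. f (int j * q)) = (\<Sum>j<M. f (int (g j)))"
    using gi per by (intro sum.cong) auto
  also have "\<dots> = (\<Sum>j<M. f (int j))"
    using sum.reindex_bij_betw[OF bij, of "\<lambda>j. f (int j)"] by simp
  finally show ?thesis .
qed

theorem proposition20:
  fixes \<mu> :: "nat \<Rightarrow> nat \<Rightarrow> int \<Rightarrow> real"
    and q :: "nat \<Rightarrow> int"
  assumes nonneg: "\<And>n a k. a \<le> 1 \<Longrightarrow> \<mu> n a k \<ge> 0"
    and q_inv: "\<And>n. [3 * q n = 1] (mod 2 ^ (n + 1))"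
    and P1: "\<And>n a k k'. a \<le> 1 \<Longrightarrow> [k = k'] (mod 2 ^ n) \<Longrightarrow> \<mu> n a k = \<mu> n a k'"
    and P2: "\<And>n a k. a \<le> 1 \<Longrightarrow>
       3 / 2 * \<mu> n a k = \<mu> (n + 1) a (2 * q n * k) + \<mu> (n + 1) (1 - a) (2 * q n * k - q n)
                          + \<mu> (n + 1) a (2 * q n * k - 2 * q n)"
    and P3: "\<And>n k. \<mu> n 0 k + \<mu> n 1 k = 1 / 2 ^ n"
  shows "\<forall>n a k. a \<le> 1 \<longrightarrow> \<mu> n a k = 1 / 2 ^ (n + 1)"
proof -
  define w where "w n k = 2^n * (\<mu> n 0 k - \<mu> n 1 k)" for n k
  have wb: "\<bar>w n k\<bar> \<le> 1" for n k
  proof -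
    have a: "\<mu> n 0 k \<ge> 0" "\<mu> n 1 k \<ge> 0" using nonneg by auto
    have "\<bar>\<mu> n 0 k - \<mu> n 1 k\<bar> \<le> 1 / 2^n" using a P3[of n k] by linarith
    then have "2^n * \<bar>\<mu> n 0 k - \<mu> n 1 k\<bar> \<le> 2^n * (1 / 2^n)"
      by (intro mult_left_mono) auto
    then show ?thesis unfolding w_def by (simp add: abs_mult)
  qed
  have wper: "w n k = w n k'" if "[k = k'] (mod 2^n)" for n k k'
    unfolding w_def using P1[OF _ that, of 0] P1[OF _ that, of 1] by simp
  have wmod: "w n x = w n (x mod 2^n)" for n x
    by (rule wper) (simp add: cong_def)
  have wrec: "3 * w n k = w (n+1) (2*q n*k) - w (n+1) (2*q n*k - q n) + w (n+1) (2*q n*k - 2*q n)" for n k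
  proof -
    have e0: "3 / 2 * \<mu> n 0 k = \<mu> (n + 1) 0 (2 * q n * k) + \<mu> (n + 1) 1 (2 * q n * k - q n)
                          + \<mu> (n + 1) 0 (2 * q n * k - 2 * q n)" using P2[of 0 n k] by simp
    have e1: "3 / 2 * \<mu> n 1 k = \<mu> (n + 1) 1 (2 * q n * k) + \<mu> (n + 1) 0 (2 * q n * k - q n)
                          + \<mu> (n + 1) 1 (2 * q n * k - 2 * q n)" using P2[of 1 n k] by simp
    have "3 * w n k = 2^(n+1) * (3/2 * \<mu> n 0 k - 3/2 * \<mu> n 1 k)"
      unfolding w_def by (simp add: algebra_simps)
    also have "\<dots> = w (n+1) (2*q n*k) - w (n+1) (2*q n*k - q n) + w (n+1) (2*q n*k - 2*q n)"
      unfolding e0 e1 w_def by (simp add: algebra_simps)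
    finally show ?thesis .
  qed
  define S where "S n = (\<Sum>k<2^n. 5*(w n (int k))^2 - w n (int k) * w n (int k + 1))" for n
  define SQ where "SQ n = (\<Sum>k<(2::nat)^n. (w n (int k))^2)" for n
  have Slow: "4 * SQ n \<le> S n" for n
  proof -
    have t: "(\<Sum>k<(2::nat)^n. (w n (int k + 1))^2 - (w n (int k))^2) = 0"
      by (rule tele_int[where f="\<lambda>x. (w n x)^2"]) (simp add: wmod[of n "2^n"])
    have "(\<Sum>k<(2::nat)^n. 4 * (w n (int k))^2 - ((w n (int k + 1))^2 - (w n (int k))^2)/2) \<le> S n"
      unfolding S_def
    proof (rule sum_mono)
      fix k
      show "4 * (w n (int k))^2 - ((w n (int k + 1))^2 - (w n (int k))^2)/2
        \<le> 5*(w n (int k))^2 - w n (int k) * w n (int k + 1)" by (rule aux1)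
    qed
    moreover have "(\<Sum>k<(2::nat)^n. 4 * (w n (int k))^2 - ((w n (int k + 1))^2 - (w n (int k))^2)/2)
        = (\<Sum>k<(2::nat)^n. 4 * (w n (int k))^2) - (\<Sum>k<(2::nat)^n. ((w n (int k + 1))^2 - (w n (int k))^2)/2)"
      by (rule sum_subtractf)
    moreover have "(\<Sum>k<(2::nat)^n. ((w n (int k + 1))^2 - (w n (int k))^2)/2) = 0"
      using t by (simp add: sum_divide_distrib[symmetric])
    moreover have "(\<Sum>k<(2::nat)^n. 4 * (w n (int k))^2) = 4 * SQ n"
      unfolding SQ_def by (simp add: sum_distrib_left)
    ultimately show ?thesis by simp
  qed
  have Sup: "S n \<le> 6 * 2^n" for n
  proof -
    have "S n \<le> (\<Sum>k<(2::nat)^n. 6)"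
      unfolding S_def
    proof (rule sum_mono)
      fix k
      have a: "\<bar>w n (int k)\<bar> \<le> 1" "\<bar>w n (int k + 1)\<bar> \<le> 1" using wb by auto
      have b: "(w n (int k))^2 \<le> 1" using a by (intro aux2) auto
      have c: "\<bar>w n (int k) * w n (int k + 1)\<bar> \<le> 1" using a by (simp add: abs_mult mult_le_one)
      show "5*(w n (int k))^2 - w n (int k) * w n (int k + 1) \<le> 6" using b c by linarith
    qed
    then show ?thesis by simp
  qed
  have step: "9 * S n \<le> 4 * S (n+1)" for n
  proof -
    define Q where "Q = q n"
    define N where "N = (2::nat)^n"
    define M where "M = (2::nat)^(n+1)"
    have MN: "M = 2 * N" unfolding M_def N_def by simp
    have intM: "int M = 2^(n+1)" unfolding M_def by simp
    define v where "v j = w (n+1) (j * Q)" for j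
    have cop: "coprime Q (int M)"
    proof -
      have "[Q * 3 = 1] (mod int M)" using q_inv[of n] unfolding intM Q_def by (simp add: mult.commute)
      then show ?thesis using coprime_iff_invertible_int by blast
    qed
    have vper: "v (t + 2 * int N) = v t" for t
    proof -
      have "(t + 2 * int N) * Q = t * Q + (2^(n+1)) * Q" unfolding N_def by (simp add: algebra_simps)
      then have "[(t + 2 * int N) * Q = t * Q] (mod 2^(n+1))" by (simp add: cong_def)
      then show ?thesis unfolding v_def by (rule wper)
    qed
    have v3: "v (j+3) = w (n+1) (j*Q + 1)" for j
    proof -
      have "[j*Q + 3*Q = j*Q + 1] (mod 2^(n+1))"
        using q_inv[of n] unfolding Q_def by (intro cong_add cong_refl)
      then show ?thesis unfolding v_def by (simp add: algebra_simps wper)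
    qed
    have u: "v (2*k-2) - v (2*k-1) + v (2*k) = 3 * w n k" for k
      using wrec[of n k] unfolding v_def Q_def by (simp add: algebra_simps)
    have u': "v (2*k) - v (2*k+1) + v (2*k+2) = 3 * w n (k+1)" for k
      using u[of "k+1"] by (simp add: algebra_simps)
    define Lk where "Lk k = 5*(v(2*k-2) - v(2*k-1) + v(2*k))^2 - (v(2*k-2) - v(2*k-1) + v(2*k))*(v(2*k) - v(2*k+1) + v(2*k+2))" for k
    define Rk where "Rk k = 4*(5*(v(2*k))^2 + 5*(v(2*k+1))^2 - v(2*k)*v(2*k+3) - v(2*k+1)*v(2*k+4))" for k
    define ph where "ph k = Phi (v(2*k-2)) (v(2*k-1)) (v(2*k)) (v(2*k+1)) (v(2*k+2))" for k
    have lhs: "9 * S n = (\<Sum>k<N. Lk (int k))"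
      unfolding S_def N_def sum_distrib_left
    proof (rule sum.cong)
      fix k
      show "9 * (5 * (w n (int k))\<^sup>2 - w n (int k) * w n (int k + 1)) = Lk (int k)"
        unfolding Lk_def u u' by (simp add: power2_eq_square algebra_simps)
    qed simp
    define f where "f x = 5*(w (n+1) x)^2 - w (n+1) x * w (n+1) (x+1)" for x
    define h where "h j = 5*(v j)^2 - v j * v (j+3)" for j
    have fper: "f x = f (x mod int M)" for x
    proof -
      have "[x + 1 = x mod int M + 1] (mod 2^(n+1))"
        unfolding intM by (simp add: cong_def mod_add_left_eq)
      then have "w (n+1) (x+1) = w (n+1) (x mod int M + 1)" by (rule wper)
      moreover have "w (n+1) x = w (n+1) (x mod int M)" unfolding intM by (rule wmod)
      ultimately show ?thesis unfolding f_def by simp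
    qed
    have "S (n+1) = (\<Sum>j<M. f (int j))" unfolding S_def M_def f_def by simp
    also have "\<dots> = (\<Sum>j<M. f (int j * Q))"
      using reindex_mult[of M Q f] cop fper unfolding M_def by simp
    also have "\<dots> = (\<Sum>j<M. h (int j))"
      unfolding f_def h_def v3 unfolding v_def by simp
    also have "\<dots> = (\<Sum>k<N. h (2*int k) + h (2*int k + 1))"
      unfolding MN by (rule split2)
    finally have Sh: "S (n+1) = (\<Sum>k<N. h (2*int k) + h (2*int k + 1))" .
    have "4 * S (n+1) = (\<Sum>k<N. Rk (int k))"
      unfolding Sh sum_distrib_left by (rule sum.cong) (simp_all add: h_def Rk_def algebra_simps)
    have phs: "ph (k+1) = Phi (v(2*k)) (v(2*k+1)) (v(2*k+2)) (v(2*k+3)) (v(2*k+4))" for k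
      unfolding ph_def by (simp add: algebra_simps)
    have per_k: "Lk k + (ph (k+1) - ph k) \<le> Rk k" for k
      unfolding Lk_def Rk_def phs unfolding ph_def by (rule key_ineq)
    have tel: "(\<Sum>k<N. ph (int k + 1) - ph (int k)) = 0"
    proof (rule tele_int)
      have a: "v (2 * int N + t) = v t" for t using vper[of t] by (simp add: add.commute)
      have b: "v (2 * int N - 2) = v (-2)" "v (2 * int N - 1) = v (-1)"
        using a[of "-2"] a[of "-1"] by simp_all
      show "ph (int N) = ph 0" unfolding ph_def using a[of 0] a[of 1] a[of 2] b by simp
    qed
    have "(\<Sum>k<N. Lk (int k)) + (\<Sum>k<N. ph (int k + 1) - ph (int k)) \<le> (\<Sum>k<N. Rk (int k))"
      unfolding sum.distrib[symmetric] by (rule sum_mono) (rule per_k)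
    then show ?thesis using lhs tel \<open>4 * S (n+1) = (\<Sum>k<N. Rk (int k))\<close> by simp
  qed
  have dec: "S n \<le> (4/9)^j * S (n+j)" for n j
  proof (induction j)
    case 0 then show ?case by simp
  next
    case (Suc j)
    have st: "S (n+j) \<le> (4/9) * S (n + Suc j)"
      using step[of "n+j"] by simp
    have "S n \<le> (4/9)^j * S (n+j)" by (rule Suc.IH)
    also have "\<dots> \<le> (4/9)^j * ((4/9) * S (n + Suc j))"
      using st by (intro mult_left_mono) auto
    also have "\<dots> = (4/9)^Suc j * S (n + Suc j)" by simp
    finally show ?case .
  qed
  have Sle0: "S n \<le> 0" for n
  proof (rule ccontr)
    assume "\<not> S n \<le> 0"
    then have pos: "S n / (6 * 2^n) > 0" by simp
    obtain j where j: "(8/9::real)^j < S n / (6 * 2^n)"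
      using real_arch_pow_inv[OF pos, of "8/9"] by auto
    have "S n \<le> (4/9)^j * (6 * 2^(n+j))"
      using dec[of n j] Sup[of "n+j"] by (smt (verit) mult_left_mono zero_le_divide_iff zero_le_power)
    also have "\<dots> = (6 * 2^n) * (8/9)^j"
      by (simp add: power_add power_mult_distrib[symmetric] algebra_simps)
    also have "\<dots> < (6 * 2^n) * (S n / (6 * 2^n))"
      using j by (intro mult_strict_left_mono) auto
    also have "\<dots> = S n" by simp
    finally show False by simp
  qed
  have w0: "w n k = 0" for n k
  proof -
    have "SQ n \<le> 0" using Slow[of n] Sle0[of n] by linarith
    then have "SQ n = 0" unfolding SQ_def by (smt (verit) sum_nonneg zero_le_power2)
    then have all0: "\<forall>i\<in>{..<(2::nat)^n}. (w n (int i))^2 = 0"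
      unfolding SQ_def by (subst sum_nonneg_eq_0_iff[symmetric]) auto
    define i where "i = nat (k mod 2^n)"
    have ii: "int i = k mod 2^n" unfolding i_def by simp
    have "i < 2^n" unfolding i_def by (simp add: nat_less_iff)
    then have "w n (int i) = 0" using all0 by auto
    then show ?thesis using wmod[of n k] ii by simp
  qed
  show ?thesis
  proof (intro allI impI)
    fix n a k assume a: "a \<le> (1::nat)"
    have e: "\<mu> n 0 k = \<mu> n 1 k" using w0[of n k] unfolding w_def by simp
    have "\<mu> n 0 k = 1 / 2^(n+1)" "\<mu> n 1 k = 1 / 2^(n+1)"
      using P3[of n k] e by (simp_all add: field_simps)
    then show "\<mu> n a k = 1 / 2 ^ (n + 1)" using a by (cases a) auto
  qed
qed

end
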